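(* Let $m\ge 1$, let $\mathcal{I}\subseteq\mathcal{M}_m$ be a decreasing monomial set with $r=\max_{f\in\mathcal{I}}\deg f$, let $f,g\in\mathcal{I}_r$ and $h=\gcd(f,g)\in\mathcal{M}_m$. Then \[ {\rm LTA}(m,2)\cdot h\cdot \Big({\rm LTA}(m,2)\cdot \tfrac{f}{h}+{\rm LTA}(m,2)\cdot \tfrac{g}{h}\Big)= {\rm LTA}(m,2)_h\cdot h\cdot \Big({\rm LTA}(m,2)_{f}\cdot \tfrac{f}{h}+{\rm LTA}(m,2)_g\cdot \tfrac{g}{h}\Big). \]
   Context: $\mathbf{R}_m=\mathbb{F}_2[x_0,\dots,x_{m-1}]/(x_0^2-x_0,\dots,x_{m-1}^2-x_{m-1})$. $\mathcal{M}_m$ is the set of monomials $x_0^{i_0}\cdots x_{m-1}^{i_{m-1}}$, $i_j\in\{0,1\}$. For a monomial $f$, $\operatorname{ind}(f)$ is the set of indices of variables dividing $f$, $\deg f=|\operatorname{ind}(f)|$; $\gcd(f,g)$ has $\operatorname{ind}=\operatorname{ind}(f)\cap\operatorname{ind}(g)$; for $h\mid f$, $f/h$ has $\operatorname{ind}=\operatorname{ind}(f)\setminus\operatorname{ind}(h)$. Order: $f\preceq_w g$ iff $\operatorname{ind}(f)\subseteq\operatorname{ind}(g)$; for equal-degree $f=x_{i_1}\cdots x_{i_s}$, $g=x_{j_1}\cdots x_{j_s}$ (increasing indices), $f\preceq_{sh}g$ iff $i_\ell\le j_\ell$ for all $\ell$; $f\preceq g$ iff $f\preceq_{sh}g^*\preceq_w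 g$ for some $g^*$. $\mathcal{I}$ is decreasing if $f\in\mathcal{I}$, $g\preceq f$ imply $g\in\mathcal{I}$; $\mathcal{I}_r=\{f\in\mathcal{I}:\deg f=r\}$. ${\rm LTA}(m,2)$ is the set of pairs $(\mathbf{B},\varepsilon)$ with $\mathbf{B}=(b_{i,j})\in\mathbb{F}_2^{m\times m}$ lower triangular with ones on the diagonal and $\varepsilon\in\mathbb{F}_2^m$; for a monomial $u$, $(\mathbf{B},\varepsilon)\cdot u\in\mathbf{R}_m$ replaces each variable $x_i$ of $u$ by $x_i+\sum_{j<i}b_{i,j}x_j+\varepsilon_i$. For a monomial $g$, ${\rm LTA}(m,2)_g$ is the set of $(\mathbf{B},\varepsilon)\in{\rm LTA}(m,2)$ with $\varepsilon_i=0$ for $i\notin\operatorname{ind}(g)$ and $b_{i,j}=0$ (for $j<i$) whenever $i\notin\operatorname{ind}(g)$ or $j\in\operatorname{ind}(g)$. For $G\subseteq{\rm LTA}(m,2)$ and monomial $u$, $G\cdot u=\{(\mathbf{B},\varepsilon)\cdot u:(\mathbf{B},\varepsilon)\in G\}$. For sets $\mathcal{S},\mathcal{T}\subseteq\mathbf{R}_m$: $\mathcal{S}+\mathcal{T}=\{s+t\}$, $\mathcal{S}\cdot\mathcal{T}=\{st\}$; $G\cdot h\cdot(\mathcal{S})$ is the product of the set $G\cdot h$ with the set $\mathcal{S}$. *)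

theory Defs
  imports Main
begin

text \<open>Elements of R_m = F_2[x_0..x_{m-1}]/(x_i^2 - x_i) are represented by their unique
multilinear normal form: a finite set of monomials (coefficients in F_2), where a
monomial is represented by its index set ind(f), a subset of {..<m}.\<close>

type_synonym mono = "nat set"
type_synonym rpoly = "nat set set"

definition monomials :: "nat \<Rightarrow> mono set" where
  "monomials m = Pow {..<m}"

text \<open>Ring operations in R_m (x_i^2 = x_i makes the product of monomials the union).\<close>
definition padd :: "rpoly \<Rightarrow> rpoly \<Rightarrow> rpoly" where
  "padd p q = (p - q) \<union> (q - p)"

definition pmul :: "rpoly \<Rightarrow> rpoly \<Rightarrow> rpoly" where
  "pmul p q = {w. odd (card {(a, b). a \<in> p \<and> b \<in> q \<and> a \<union> b = w})}"

definition pone :: rpoly where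
  "pone = {{}}"

definition weak_le :: "mono \<Rightarrow> mono \<Rightarrow> bool" where
  "weak_le f g \<longleftrightarrow> f \<subseteq> g"

definition sh_le :: "mono \<Rightarrow> mono \<Rightarrow> bool" where
  "sh_le f g \<longleftrightarrow> card f = card g \<and>
     list_all2 (\<le>) (sorted_list_of_set f) (sorted_list_of_set g)"

definition mono_le :: "mono \<Rightarrow> mono \<Rightarrow> bool" where
  "mono_le f g \<longleftrightarrow> (\<exists>g'. sh_le f g' \<and> weak_le g' g)"

definition decreasing :: "nat \<Rightarrow> mono set \<Rightarrow> bool" where
  "decreasing m I \<longleftrightarrow> I \<subseteq> monomials m \<and>
     (\<forall>f\<in>I. \<forall>g\<in>monomials m. mono_le g f \<longrightarrow> g \<in> I)"

text \<open>LTA(m,2): pairs (B, eps), B an m x m lower triangular binary matrix with ones on the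
diagonal (entries B i j for i,j < m; all other entries are False), eps in F_2^m.\<close>
type_synonym lta = "(nat \<Rightarrow> nat \<Rightarrow> bool) \<times> (nat \<Rightarrow> bool)"

definition LTA :: "nat \<Rightarrow> lta set" where
  "LTA m = {(B, e). (\<forall>i j. B i j \<longrightarrow> i < m \<and> j < m) \<and>
                    (\<forall>i j. j > i \<longrightarrow> \<not> B i j) \<and>
                    (\<forall>i < m. B i i) \<and>
                    (\<forall>i. e i \<longrightarrow> i < m)}"

definition LTA_sub :: "nat \<Rightarrow> mono \<Rightarrow> lta set" where
  "LTA_sub m g = {(B, e) \<in> LTA m. (\<forall>i. i \<notin> g \<longrightarrow> \<not> e i) \<and>
       (\<forall>i j. j < i \<longrightarrow> (i \<notin> g \<or> j \<in> g) \<longrightarrow> \<not> B i j)}"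

text \<open>The image of x_i under (B, eps): x_i + sum_{j<i} b_{i,j} x_j + eps_i.\<close>
definition lin :: "lta \<Rightarrow> nat \<Rightarrow> rpoly" where
  "lin A i = {{i}} \<union> {{j} | j. j < i \<and> fst A i j} \<union> (if snd A i then {{}} else {})"

definition act :: "lta \<Rightarrow> mono \<Rightarrow> rpoly" where
  "act A u = foldr (\<lambda>i p. pmul (lin A i) p) (sorted_list_of_set u) pone"

definition orbit :: "lta set \<Rightarrow> mono \<Rightarrow> rpoly set" where
  "orbit G u = (\<lambda>A. act A u) ` G"

definition set_add :: "rpoly set \<Rightarrow> rpoly set \<Rightarrow> rpoly set" where
  "set_add S T = {padd s t | s t. s \<in> S \<and> t \<in> T}"

definition set_mul :: "rpoly set \<Rightarrow> rpoly set \<Rightarrow> rpoly set" where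
  "set_mul S T = {pmul s t | s t. s \<in> S \<and> t \<in> T}"

end

theory Submission
  imports Defs
begin

definition ev :: "rpoly \<Rightarrow> nat set \<Rightarrow> bool" where
  "ev p x = odd (card {a\<in>p. a \<subseteq> x})"

lemma odd_symdiff:
  assumes "finite P" "finite Q"
  shows "odd (card ((P - Q) \<union> (Q - P))) = (odd (card P) \<noteq> odd (card Q))"
proof -
  have a: "card P = card (P - Q) + card (P \<inter> Q)"
    using assms by (metis Int_Diff_disjoint Un_Diff_Int card_Un_disjoint finite_Diff finite_Int inf_commute)
  have b: "card Q = card (Q - P) + card (P \<inter> Q)"
    using assms by (metis Int_Diff_disjoint Un_Diff_Int card_Un_disjoint finite_Diff finite_Int inf_commute)
  have c: "card ((P - Q) \<union> (Q - P)) = card (P - Q) + card (Q - P)"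
    using assms by (intro card_Un_disjoint) auto
  show ?thesis using a b c by presburger
qed

lemma ev_padd:
  assumes "finite p" "finite q"
  shows "ev (padd p q) x = (ev p x \<noteq> ev q x)"
proof -
  have "{a \<in> padd p q. a \<subseteq> x} = ({a\<in>p. a \<subseteq> x} - {a\<in>q. a \<subseteq> x}) \<union> ({a\<in>q. a \<subseteq> x} - {a\<in>p. a \<subseteq> x})"
    unfolding padd_def by auto
  then show ?thesis unfolding ev_def using odd_symdiff[of "{a\<in>p. a \<subseteq> x}" "{a\<in>q. a \<subseteq> x}"] assms by simp
qed

lemma parity_sum:
  assumes "finite W"
  shows "even (\<Sum>w\<in>W. k w :: nat) = even (card {w\<in>W. odd (k w)})"
  using assms
proof (induction W rule: finite_induct)
  case empty then show ?case by simp
next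
  case (insert a W)
  have "{w\<in>insert a W. odd (k w)} = (if odd (k a) then insert a {w\<in>W. odd (k w)} else {w\<in>W. odd (k w)})"
    by auto
  then show ?case using insert by (auto simp: card_insert_if)
qed

lemma finite_pmul:
  assumes "finite p" "finite q"
  shows "finite (pmul p q)"
proof -
  have "pmul p q \<subseteq> (\<lambda>(a,b). a \<union> b) ` (p \<times> q)"
  proof
    fix w assume "w \<in> pmul p q"
    then have "card {(a, b). a \<in> p \<and> b \<in> q \<and> a \<union> b = w} \<noteq> 0" unfolding pmul_def by (auto elim: oddE)
    then have "{(a, b). a \<in> p \<and> b \<in> q \<and> a \<union> b = w} \<noteq> {}" by (metis card.empty)
    then obtain a b where "a \<in> p" "b \<in> q" "a \<union> b = w" by blast
    then show "w \<in> (\<lambda>(a,b). a \<union> b) ` (p \<times> q)" by force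
  qed
  then show ?thesis using assms by (meson finite_SigmaI finite_imageI finite_subset)
qed

lemma ev_pmul:
  assumes "finite p" "finite q"
  shows "ev (pmul p q) x = (ev p x \<and> ev q x)"
proof -
  define P where "P = {a\<in>p. a \<subseteq> x}"
  define Q where "Q = {a\<in>q. a \<subseteq> x}"
  define u where "u = (\<lambda>(a::nat set,b::nat set). a \<union> b)"
  define W where "W = u ` (P \<times> Q)"
  define k where "k = (\<lambda>w. card {z \<in> P \<times> Q. u z = w})"
  have fPQ: "finite (P \<times> Q)" using assms P_def Q_def by auto
  have fW: "finite W" using fPQ W_def by auto
  have fib: "{(a, b). a \<in> p \<and> b \<in> q \<and> a \<union> b = w} = {z \<in> P \<times> Q. u z = w}" if "w \<subseteq> x" for w
    using that unfolding P_def Q_def u_def by auto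
  have e1: "{w \<in> pmul p q. w \<subseteq> x} = {w\<in>W. odd (k w)}"
  proof (intro set_eqI iffI)
    fix w assume w: "w \<in> {w \<in> pmul p q. w \<subseteq> x}"
    then have o: "odd (k w)" using fib unfolding pmul_def k_def by auto
    then have "{z \<in> P \<times> Q. u z = w} \<noteq> {}" unfolding k_def by (metis card.empty odd_card_imp_not_empty)
    then have "w \<in> W" unfolding W_def by auto
    then show "w \<in> {w\<in>W. odd (k w)}" using o by auto
  next
    fix w assume w: "w \<in> {w\<in>W. odd (k w)}"
    then have "w \<subseteq> x" unfolding W_def P_def Q_def u_def by auto
    then show "w \<in> {w \<in> pmul p q. w \<subseteq> x}" using w fib unfolding pmul_def k_def by auto
  qed
  have "card (P \<times> Q) = (\<Sum>w\<in>W. k w)"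
  proof -
    have "P \<times> Q = (\<Union>w\<in>W. {z \<in> P \<times> Q. u z = w})" unfolding W_def by auto
    then have "card (P \<times> Q) = card (\<Union>w\<in>W. {z \<in> P \<times> Q. u z = w})" by simp
    also have "\<dots> = (\<Sum>w\<in>W. card {z \<in> P \<times> Q. u z = w})"
      using fW fPQ by (intro card_UN_disjoint) auto
    finally show ?thesis unfolding k_def .
  qed
  then have "ev (pmul p q) x = odd (card (P \<times> Q))"
    unfolding ev_def e1 using parity_sum[OF fW, of k] by simp
  then show ?thesis unfolding ev_def P_def Q_def by (simp add: card_cartesian_product)
qed


lemma ev_inj:
  assumes "p \<subseteq> Pow {..<m}" "q \<subseteq> Pow {..<m}" "\<forall>x. x \<subseteq> {..<m} \<longrightarrow> ev p x = ev q x"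
  shows "p = q"
proof (rule ccontr)
  assume ne: "p \<noteq> q"
  define d where "d = padd p q"
  have fp: "finite p" "finite q" using assms(1,2) finite_subset by blast+
  have dsub: "d \<subseteq> Pow {..<m}" using assms(1,2) unfolding d_def padd_def by auto
  then have fd: "finite d" using finite_subset by blast
  have "d \<noteq> {}" using ne unfolding d_def padd_def by auto
  then obtain a where a: "a \<in> d" "\<forall>b\<in>d. b \<le> a \<longrightarrow> a = b" using finite_has_minimal[OF fd] by blast
  have "{b\<in>d. b \<subseteq> a} = {a}" using a by auto
  then have "ev d a" unfolding ev_def by simp
  moreover have "a \<subseteq> {..<m}" using a dsub by auto
  ultimately show False using assms(3) ev_padd[OF fp] unfolding d_def by auto
qed

definition fev :: "nat set \<times> bool \<Rightarrow> nat set \<Rightarrow> bool" where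
  "fev F x = (odd (card (fst F \<inter> x)) \<noteq> snd F)"

definition row :: "lta \<Rightarrow> nat \<Rightarrow> nat set \<times> bool" where
  "row A i = ({j. j < i \<and> fst A i j}, \<not> snd A i)"

lemma finite_lin: "finite (lin A i)"
proof -
  have "{{j} | j. j < i \<and> fst A i j} \<subseteq> (\<lambda>j. {j}) ` {..<i}" by auto
  then have "finite {{j} | j. j < i \<and> fst A i j}" using finite_subset by blast
  then show ?thesis unfolding lin_def by auto
qed

lemma ev_lin: "ev (lin A i) x = ((i \<in> x) = fev (row A i) x)"
proof -
  define J where "J = {j. j < i \<and> fst A i j \<and> j \<in> x}"
  define S1 where "S1 = (if i \<in> x then {{i}} else {})"
  define S3 where "S3 = (if snd A i then {{}} else ({}::nat set set))"
  have eq: "{a \<in> lin A i. a \<subseteq> x} = S1 \<union> ((\<lambda>j. {j}) ` J) \<union> S3"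
    unfolding lin_def S1_def S3_def J_def by auto
  have fJ: "finite J" unfolding J_def by auto
  have cJ: "card ((\<lambda>j. {j}) ` J) = card J" by (intro card_image) (auto simp: inj_on_def)
  have "card (S1 \<union> ((\<lambda>j. {j}) ` J) \<union> S3) = card (S1 \<union> ((\<lambda>j. {j}) ` J)) + card S3"
    using fJ unfolding S1_def S3_def J_def by (intro card_Un_disjoint) auto
  also have "card (S1 \<union> ((\<lambda>j. {j}) ` J)) = card S1 + card J"
    using fJ cJ unfolding S1_def J_def by (subst card_Un_disjoint) auto
  finally have c: "card {a \<in> lin A i. a \<subseteq> x} = card S1 + card J + card S3" using eq by simp
  have "fst (row A i) \<inter> x = J" unfolding row_def J_def by auto
  then show ?thesis unfolding ev_def fev_def c S1_def S3_def
    by (simp add: row_def)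
qed

lemma act_fold:
  "finite (foldr (\<lambda>i p. pmul (lin A i) p) xs pone) \<and>
   ev (foldr (\<lambda>i p. pmul (lin A i) p) xs pone) x = (\<forall>i\<in>set xs. (i \<in> x) = fev (row A i) x)"
proof (induction xs)
  case Nil
  have "{a \<in> pone. a \<subseteq> x} = {{}}" unfolding pone_def by auto
  then show ?case by (simp add: pone_def ev_def)
next
  case (Cons a xs)
  then show ?case using finite_pmul ev_pmul finite_lin ev_lin by simp
qed

lemma ev_act: "finite u \<Longrightarrow> ev (act A u) x = (\<forall>i\<in>u. (i \<in> x) = fev (row A i) x)"
  unfolding act_def using act_fold by simp

lemma finite_act: "finite (act A u)"
  unfolding act_def using act_fold by simp

lemma pmul_sub: "p \<subseteq> Pow U \<Longrightarrow> q \<subseteq> Pow U \<Longrightarrow> pmul p q \<subseteq> Pow U"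
proof
  fix w assume p: "p \<subseteq> Pow U" and q: "q \<subseteq> Pow U" and "w \<in> pmul p q"
  then have "card {(a, b). a \<in> p \<and> b \<in> q \<and> a \<union> b = w} \<noteq> 0" unfolding pmul_def by (auto elim: oddE)
  then have "{(a, b). a \<in> p \<and> b \<in> q \<and> a \<union> b = w} \<noteq> {}" by (metis card.empty)
  then obtain a b where "a \<in> p" "b \<in> q" "a \<union> b = w" by blast
  then show "w \<in> Pow U" using p q by auto
qed

lemma act_sub:
  assumes "u \<subseteq> {..<m}"
  shows "act A u \<subseteq> Pow {..<m}"
proof -
  have "\<forall>i\<in>set xs. i < m \<Longrightarrow> foldr (\<lambda>i p. pmul (lin A i) p) xs pone \<subseteq> Pow {..<m}" for xs
  proof (induction xs)
    case Nil then show ?case by (simp add: pone_def)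
  next
    case (Cons a xs)
    have "lin A a \<subseteq> Pow {..<m}" using Cons.prems unfolding lin_def by auto
    then show ?case using Cons pmul_sub by simp
  qed
  moreover have "finite u" using assms finite_subset by blast
  ultimately show ?thesis unfolding act_def using assms by (metis lessThan_iff set_sorted_list_of_set subsetD)
qed


lemma fev_symdiff:
  assumes "finite A" "finite B"
  shows "fev ((A - B) \<union> (B - A), c \<noteq> d) x = (fev (A, c) x \<noteq> fev (B, d) x)"
proof -
  have "((A - B) \<union> (B - A)) \<inter> x = ((A \<inter> x) - (B \<inter> x)) \<union> ((B \<inter> x) - (A \<inter> x))" by auto
  then show ?thesis unfolding fev_def using odd_symdiff[of "A \<inter> x" "B \<inter> x"] assms by auto
qed

lemma elim_form:
  assumes R: "\<forall>i\<in>V. fst (R i) \<subseteq> {..<i}"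
  shows "S \<subseteq> {..<n} \<Longrightarrow> \<exists>S' c'. S' \<subseteq> {..<n} - V \<and>
     (\<forall>x. (\<forall>k\<in>V. k < n \<longrightarrow> (k \<in> x) = fev (R k) x) \<longrightarrow> fev (S, c) x = fev (S', c') x)"
proof (induction n arbitrary: S c rule: less_induct)
  case (less n)
  show ?case
  proof (cases n)
    case 0
    then show ?thesis using less.prems by (intro exI[of _ "{}"] exI[of _ c]) auto
  next
    case (Suc n0)
    define S0 where "S0 = S - {n0}"
    have S0: "S0 \<subseteq> {..<n0}" using less.prems Suc unfolding S0_def by auto
    obtain S0' c0' where h0: "S0' \<subseteq> {..<n0} - V"
      "\<forall>x. (\<forall>k\<in>V. k < n0 \<longrightarrow> (k \<in> x) = fev (R k) x) \<longrightarrow> fev (S0, c) x = fev (S0', c0') x"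
      using less.IH[OF _ S0, of c] Suc by auto
    have "S0' \<subseteq> {..<n0}" using h0(1) by blast
    then have fS0: "finite S0" "finite S0'" using S0 finite_subset[OF _ finite_lessThan[of n0]] by blast+
    show ?thesis
    proof (cases "n0 \<in> S")
      case False
      then have "S = S0" unfolding S0_def by auto
      show ?thesis
      proof (intro exI[of _ S0'] exI[of _ c0'] conjI allI impI)
        show "S0' \<subseteq> {..<n} - V" using h0(1) Suc by auto
      next
        fix x assume hx: "\<forall>k\<in>V. k < n \<longrightarrow> (k \<in> x) = fev (R k) x"
        then have "\<forall>k\<in>V. k < n0 \<longrightarrow> (k \<in> x) = fev (R k) x" using Suc by simp
        then have "fev (S0, c) x = fev (S0', c0') x" using h0(2) by blast
        then show "fev (S, c) x = fev (S0', c0') x" using \<open>S = S0\<close> by simp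
      qed
    next
      case nS: True
      have split: "fev (S, c) x = (fev (S0, c) x \<noteq> (n0 \<in> x))" for x
      proof (cases "n0 \<in> x")
        case True
        then have "S \<inter> x = insert n0 (S0 \<inter> x)" "n0 \<notin> S0 \<inter> x" using nS unfolding S0_def by auto
        then show ?thesis using True fS0(1) unfolding fev_def by simp
      next
        case False
        then have "S \<inter> x = S0 \<inter> x" unfolding S0_def by auto
        then show ?thesis using False unfolding fev_def by simp
      qed
      show ?thesis
      proof (cases "n0 \<in> V")
        case False
        have "fev (insert n0 S0', c0') x = (fev (S0', c0') x \<noteq> (n0 \<in> x))" for x
        proof (cases "n0 \<in> x")
          case True
          have "n0 \<notin> S0'" using h0(1) by auto
          then have "insert n0 S0' \<inter> x = insert n0 (S0' \<inter> x)" "n0 \<notin> S0' \<inter> x" using True by auto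
          then show ?thesis using True fS0(2) unfolding fev_def by simp
        next
          case False
          then have "insert n0 S0' \<inter> x = S0' \<inter> x" by auto
          then show ?thesis using False unfolding fev_def by simp
        qed
        note ins = this
        show ?thesis
        proof (intro exI[of _ "insert n0 S0'"] exI[of _ c0'] conjI allI impI)
          show "insert n0 S0' \<subseteq> {..<n} - V" using h0(1) Suc False by auto
        next
          fix x assume hx: "\<forall>k\<in>V. k < n \<longrightarrow> (k \<in> x) = fev (R k) x"
          then have "\<forall>k\<in>V. k < n0 \<longrightarrow> (k \<in> x) = fev (R k) x" using Suc by simp
          then have "fev (S0, c) x = fev (S0', c0') x" using h0(2) by blast
          then show "fev (S, c) x = fev (insert n0 S0', c0') x" using split[of x] ins[of x] by simp
        qed
      next
        case True
        obtain T d where Rn: "R n0 = (T, d)" by (cases "R n0")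
        have T: "T \<subseteq> {..<n0}" using R True Rn by force
        obtain T' d' where hT: "T' \<subseteq> {..<n0} - V"
          "\<forall>x. (\<forall>k\<in>V. k < n0 \<longrightarrow> (k \<in> x) = fev (R k) x) \<longrightarrow> fev (T, d) x = fev (T', d') x"
          using less.IH[OF _ T, of d] Suc by auto
        have "T' \<subseteq> {..<n0}" using hT(1) by blast
        then have fT: "finite T'" using finite_subset[OF _ finite_lessThan[of n0]] by blast
        show ?thesis
        proof (intro exI[of _ "(S0' - T') \<union> (T' - S0')"] exI[of _ "c0' \<noteq> d'"] conjI allI impI)
          show "(S0' - T') \<union> (T' - S0') \<subseteq> {..<n} - V" using h0(1) hT(1) Suc by auto
        next
          fix x assume hx: "\<forall>k\<in>V. k < n \<longrightarrow> (k \<in> x) = fev (R k) x"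
          have hx': "\<forall>k\<in>V. k < n0 \<longrightarrow> (k \<in> x) = fev (R k) x" using hx Suc by simp
          have "(n0 \<in> x) = fev (R n0) x" using hx True Suc by simp
          also have "\<dots> = fev (T', d') x" using Rn hT(2) hx' by simp
          finally have "(n0 \<in> x) = fev (T', d') x" .
          moreover have "fev (S0, c) x = fev (S0', c0') x" using hx' h0(2) by blast
          ultimately show "fev (S, c) x = fev ((S0' - T') \<union> (T' - S0'), c0' \<noteq> d') x"
            using split fev_symdiff[OF fS0(2) fT] by simp
        qed
      qed
    qed
  qed
qed

lemma sys_eq:
  assumes "\<forall>i\<in>V. \<forall>x. (\<forall>k\<in>V. k < i \<longrightarrow> (k \<in> x) = fev (R k) x) \<longrightarrow> fev (R i) x = fev (R' i) x"
  shows "(\<forall>i\<in>V. (i \<in> x) = fev (R i) x) \<longleftrightarrow> (\<forall>i\<in>V. (i \<in> x) = fev (R' i) x)"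
proof
  assume "\<forall>i\<in>V. (i \<in> x) = fev (R i) x"
  then show "\<forall>i\<in>V. (i \<in> x) = fev (R' i) x" using assms by blast
next
  assume h: "\<forall>i\<in>V. (i \<in> x) = fev (R' i) x"
  have "i \<in> V \<longrightarrow> (i \<in> x) = fev (R i) x" for i
  proof (induction i rule: less_induct)
    case (less i)
    show ?case
    proof
      assume iV: "i \<in> V"
      have "\<forall>k\<in>V. k < i \<longrightarrow> (k \<in> x) = fev (R k) x" using less by blast
      then have "fev (R i) x = fev (R' i) x" using assms iV by blast
      then show "(i \<in> x) = fev (R i) x" using h iV by simp
    qed
  qed
  then show "\<forall>i\<in>V. (i \<in> x) = fev (R i) x" by blast
qed

lemma normalize:
  assumes "\<forall>i\<in>V. fst (R i) \<subseteq> {..<i}"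
  shows "\<exists>N. (\<forall>i\<in>V. fst (N i) \<subseteq> {..<i} - V) \<and>
     (\<forall>i\<in>V. \<forall>x. (\<forall>k\<in>V. k < i \<longrightarrow> (k \<in> x) = fev (R k) x) \<longrightarrow> fev (R i) x = fev (N i) x)"
proof -
  have "\<forall>i\<in>V. \<exists>F. fst F \<subseteq> {..<i} - V \<and>
     (\<forall>x. (\<forall>k\<in>V. k < i \<longrightarrow> (k \<in> x) = fev (R k) x) \<longrightarrow> fev (R i) x = fev F x)"
  proof
    fix i assume i: "i \<in> V"
    obtain S c where Ri: "R i = (S, c)" by (cases "R i")
    have "S \<subseteq> {..<i}" using assms i Ri by force
    from elim_form[OF assms this, of c] obtain S' c' where
      h: "S' \<subseteq> {..<i} - V" "\<forall>x. (\<forall>k\<in>V. k < i \<longrightarrow> (k \<in> x) = fev (R k) x) \<longrightarrow> fev (S, c) x = fev (S', c') x"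
      by blast
    show "\<exists>F. fst F \<subseteq> {..<i} - V \<and>
     (\<forall>x. (\<forall>k\<in>V. k < i \<longrightarrow> (k \<in> x) = fev (R k) x) \<longrightarrow> fev (R i) x = fev F x)"
      using h Ri by (intro exI[of _ "(S', c')"]) simp
  qed
  then have "\<exists>N. \<forall>i\<in>V. fst (N i) \<subseteq> {..<i} - V \<and>
     (\<forall>x. (\<forall>k\<in>V. k < i \<longrightarrow> (k \<in> x) = fev (R k) x) \<longrightarrow> fev (R i) x = fev (N i) x)"
    by (rule bchoice)
  then obtain N where N: "\<forall>i\<in>V. fst (N i) \<subseteq> {..<i} - V \<and>
     (\<forall>x. (\<forall>k\<in>V. k < i \<longrightarrow> (k \<in> x) = fev (R k) x) \<longrightarrow> fev (R i) x = fev (N i) x)" ..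
  show ?thesis
  proof (intro exI[of _ N] conjI)
    show "\<forall>i\<in>V. fst (N i) \<subseteq> {..<i} - V" using N by simp
    show "\<forall>i\<in>V. \<forall>x. (\<forall>k\<in>V. k < i \<longrightarrow> (k \<in> x) = fev (R k) x) \<longrightarrow> fev (R i) x = fev (N i) x"
      using N by simp
  qed
qed

definition mkC :: "nat \<Rightarrow> nat set \<Rightarrow> (nat \<Rightarrow> nat set \<times> bool) \<Rightarrow> lta" where
  "mkC m V N = (\<lambda>i j. (i < m \<and> j = i) \<or> (i \<in> V \<and> j < i \<and> j \<in> fst (N i)), \<lambda>i. i \<in> V \<and> \<not> snd (N i))"

lemma mkC_row:
  assumes "i \<in> V" "fst (N i) \<subseteq> {..<i}"
  shows "row (mkC m V N) i = N i"
  using assms unfolding row_def mkC_def by (cases "N i") auto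

lemma mkC_LTA_sub:
  assumes "V \<subseteq> g" "g \<subseteq> {..<m}" "\<forall>i\<in>V. fst (N i) \<subseteq> {..<i} - g"
  shows "mkC m V N \<in> LTA_sub m g"
  using assms unfolding mkC_def LTA_sub_def LTA_def by (auto; blast)

lemma LTA_row: "fst (row A i) \<subseteq> {..<i}"
  unfolding row_def by auto


lemma finite_padd: "finite p \<Longrightarrow> finite q \<Longrightarrow> finite (padd p q)"
  unfolding padd_def by simp

lemma part_eq:
  assumes hf: "h \<subseteq> f" and fin: "finite f" and fm: "f \<subseteq> {..<m}"
  shows "\<exists>C \<in> LTA_sub m f. \<forall>x.
     ((\<forall>i\<in>h. (i \<in> x) = fev (row A0 i) x) \<and> (\<forall>i\<in>f - h. (i \<in> x) = fev (row A1 i) x)) \<longleftrightarrow>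
     ((\<forall>i\<in>h. (i \<in> x) = fev (row A0 i) x) \<and> (\<forall>i\<in>f - h. (i \<in> x) = fev (row C i) x))"
proof -
  define Rf where "Rf = (\<lambda>i. if i \<in> h then row A0 i else row A1 i)"
  have Rfs: "\<forall>i\<in>f. fst (Rf i) \<subseteq> {..<i}" unfolding Rf_def using LTA_row by simp
  obtain N where N1: "\<forall>i\<in>f. fst (N i) \<subseteq> {..<i} - f"
    and N2: "\<forall>i\<in>f. \<forall>x. (\<forall>k\<in>f. k < i \<longrightarrow> (k \<in> x) = fev (Rf k) x) \<longrightarrow> fev (Rf i) x = fev (N i) x"
    using normalize[OF Rfs] by blast
  define Rf' where "Rf' = (\<lambda>i. if i \<in> h then Rf i else N i)"
  have hyp: "\<forall>i\<in>f. \<forall>x. (\<forall>k\<in>f. k < i \<longrightarrow> (k \<in> x) = fev (Rf k) x) \<longrightarrow> fev (Rf i) x = fev (Rf' i) x"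
    using N2 unfolding Rf'_def by simp
  define C where "C = mkC m (f - h) N"
  have C: "C \<in> LTA_sub m f" unfolding C_def
    by (rule mkC_LTA_sub) (use N1 fm in auto)
  have rowC: "row C i = N i" if "i \<in> f - h" for i
    unfolding C_def using N1 that by (intro mkC_row) blast+
  show ?thesis
  proof (intro bexI[OF _ C] allI)
    fix x
    have "(\<forall>i\<in>f. (i \<in> x) = fev (Rf i) x) \<longleftrightarrow> (\<forall>i\<in>f. (i \<in> x) = fev (Rf' i) x)"
      by (rule sys_eq[OF hyp])
    moreover have "(\<forall>i\<in>f. (i \<in> x) = fev (Rf i) x) \<longleftrightarrow>
      ((\<forall>i\<in>h. (i \<in> x) = fev (row A0 i) x) \<and> (\<forall>i\<in>f - h. (i \<in> x) = fev (row A1 i) x))"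
      unfolding Rf_def using hf by auto
    moreover have "(\<forall>i\<in>f. (i \<in> x) = fev (Rf' i) x) \<longleftrightarrow>
      ((\<forall>i\<in>h. (i \<in> x) = fev (row A0 i) x) \<and> (\<forall>i\<in>f - h. (i \<in> x) = fev (row C i) x))"
      unfolding Rf'_def Rf_def using hf rowC by auto
    ultimately show "((\<forall>i\<in>h. (i \<in> x) = fev (row A0 i) x) \<and> (\<forall>i\<in>f - h. (i \<in> x) = fev (row A1 i) x)) \<longleftrightarrow>
     ((\<forall>i\<in>h. (i \<in> x) = fev (row A0 i) x) \<and> (\<forall>i\<in>f - h. (i \<in> x) = fev (row C i) x))"
      by simp
  qed
qed

lemma h_eq:
  assumes "h \<subseteq> {..<m}"
  shows "\<exists>C \<in> LTA_sub m h. \<forall>x.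
     (\<forall>i\<in>h. (i \<in> x) = fev (row A0 i) x) \<longleftrightarrow> (\<forall>i\<in>h. (i \<in> x) = fev (row C i) x)"
proof -
  have Rs: "\<forall>i\<in>h. fst (row A0 i) \<subseteq> {..<i}" using LTA_row by simp
  obtain N where N1: "\<forall>i\<in>h. fst (N i) \<subseteq> {..<i} - h"
    and N2: "\<forall>i\<in>h. \<forall>x. (\<forall>k\<in>h. k < i \<longrightarrow> (k \<in> x) = fev (row A0 k) x) \<longrightarrow> fev (row A0 i) x = fev (N i) x"
    using normalize[OF Rs] by blast
  define C where "C = mkC m h N"
  have C: "C \<in> LTA_sub m h" unfolding C_def
    by (rule mkC_LTA_sub) (use N1 assms in auto)
  have rowC: "row C i = N i" if "i \<in> h" for i
    unfolding C_def using N1 that by (intro mkC_row) blast+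
  show ?thesis
  proof (intro bexI[OF _ C] allI)
    fix x
    have "(\<forall>i\<in>h. (i \<in> x) = fev (row A0 i) x) \<longleftrightarrow> (\<forall>i\<in>h. (i \<in> x) = fev (N i) x)"
      by (rule sys_eq[OF N2])
    then show "(\<forall>i\<in>h. (i \<in> x) = fev (row A0 i) x) \<longleftrightarrow> (\<forall>i\<in>h. (i \<in> x) = fev (row C i) x)"
      using rowC by simp
  qed
qed

lemma core:
  assumes fm: "f \<subseteq> {..<m}" and gm: "g \<subseteq> {..<m}" and hd: "h = f \<inter> g"
  shows "pmul (act A0 h) (padd (act A1 (f - h)) (act A2 (g - h))) \<in>
    set_mul (orbit (LTA_sub m h) h) (set_add (orbit (LTA_sub m f) (f - h)) (orbit (LTA_sub m g) (g - h)))"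
proof -
  have hm: "h \<subseteq> {..<m}" using fm unfolding hd by blast
  have hsf: "h \<subseteq> f" and hsg: "h \<subseteq> g" unfolding hd by auto
  have ff: "finite f" by (rule finite_subset[OF fm finite_lessThan])
  have fg: "finite g" by (rule finite_subset[OF gm finite_lessThan])
  have fin: "finite f" "finite g" "finite h" "finite (f - h)" "finite (g - h)"
    using ff fg unfolding hd by simp_all
  obtain C0 where C0: "C0 \<in> LTA_sub m h"
    and E0: "\<forall>x. (\<forall>i\<in>h. (i \<in> x) = fev (row A0 i) x) \<longleftrightarrow> (\<forall>i\<in>h. (i \<in> x) = fev (row C0 i) x)"
    using h_eq[OF hm] by blast
  obtain C1 where C1: "C1 \<in> LTA_sub m f" and E1: "\<forall>x.
     ((\<forall>i\<in>h. (i \<in> x) = fev (row A0 i) x) \<and> (\<forall>i\<in>f - h. (i \<in> x) = fev (row A1 i) x)) \<longleftrightarrow>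
     ((\<forall>i\<in>h. (i \<in> x) = fev (row A0 i) x) \<and> (\<forall>i\<in>f - h. (i \<in> x) = fev (row C1 i) x))"
    using part_eq[of h f m A0 A1, OF hsf fin(1) fm] ..
  obtain C2 where C2: "C2 \<in> LTA_sub m g" and E2: "\<forall>x.
     ((\<forall>i\<in>h. (i \<in> x) = fev (row A0 i) x) \<and> (\<forall>i\<in>g - h. (i \<in> x) = fev (row A2 i) x)) \<longleftrightarrow>
     ((\<forall>i\<in>h. (i \<in> x) = fev (row A0 i) x) \<and> (\<forall>i\<in>g - h. (i \<in> x) = fev (row C2 i) x))"
    using part_eq[of h g m A0 A2, OF hsg fin(2) gm] ..
  define z where "z = pmul (act A0 h) (padd (act A1 (f - h)) (act A2 (g - h)))"
  define w where "w = pmul (act C0 h) (padd (act C1 (f - h)) (act C2 (g - h)))"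
  have sub: "z \<subseteq> Pow {..<m}" "w \<subseteq> Pow {..<m}"
  proof -
    have a: "f - h \<subseteq> {..<m}" "g - h \<subseteq> {..<m}" using fm gm by auto
    have ps: "padd p q \<subseteq> Pow {..<m}" if "p \<subseteq> Pow {..<m}" "q \<subseteq> Pow {..<m}" for p q
      using that unfolding padd_def by blast
    show "z \<subseteq> Pow {..<m}" unfolding z_def
      by (intro pmul_sub ps act_sub hm a)
    show "w \<subseteq> Pow {..<m}" unfolding w_def
      by (intro pmul_sub ps act_sub hm a)
  qed
  have "ev z x = ev w x" for x
  proof -
    have "ev z x = (ev (act A0 h) x \<and> (ev (act A1 (f - h)) x \<noteq> ev (act A2 (g - h)) x))"
      unfolding z_def by (simp add: ev_pmul ev_padd finite_act finite_pmul finite_padd)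
    also have "\<dots> = ((\<forall>i\<in>h. (i \<in> x) = fev (row A0 i) x) \<and>
        ((\<forall>i\<in>f - h. (i \<in> x) = fev (row A1 i) x) \<noteq> (\<forall>i\<in>g - h. (i \<in> x) = fev (row A2 i) x)))"
      using fin by (simp add: ev_act)
    also have "\<dots> = ((\<forall>i\<in>h. (i \<in> x) = fev (row A0 i) x) \<and>
        ((\<forall>i\<in>f - h. (i \<in> x) = fev (row C1 i) x) \<noteq> (\<forall>i\<in>g - h. (i \<in> x) = fev (row C2 i) x)))"
      using E1[rule_format, of x] E2[rule_format, of x] by argo
    also have "\<dots> = ((\<forall>i\<in>h. (i \<in> x) = fev (row C0 i) x) \<and>
        ((\<forall>i\<in>f - h. (i \<in> x) = fev (row C1 i) x) \<noteq> (\<forall>i\<in>g - h. (i \<in> x) = fev (row C2 i) x)))"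
      using E0[rule_format, of x] by argo
    also have "\<dots> = ev w x"
      unfolding w_def using fin by (simp add: ev_pmul ev_padd finite_act finite_pmul finite_padd ev_act)
    finally show ?thesis .
  qed
  then have "z = w" by (intro ev_inj[OF sub]) simp
  moreover have "w \<in> set_mul (orbit (LTA_sub m h) h) (set_add (orbit (LTA_sub m f) (f - h)) (orbit (LTA_sub m g) (g - h)))"
  proof -
    have "act C1 (f - h) \<in> orbit (LTA_sub m f) (f - h)" "act C2 (g - h) \<in> orbit (LTA_sub m g) (g - h)"
      "act C0 h \<in> orbit (LTA_sub m h) h" unfolding orbit_def using C0 C1 C2 by auto
    then show ?thesis unfolding w_def set_mul_def set_add_def by blast
  qed
  ultimately show ?thesis unfolding z_def by simp
qed


lemma LTA_sub_subset: "LTA_sub m u \<subseteq> LTA m"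
  unfolding LTA_sub_def by auto

lemma orbit_mono: "G \<subseteq> H \<Longrightarrow> orbit G u \<subseteq> orbit H u"
  unfolding orbit_def by auto

lemma set_add_mono: "S \<subseteq> S' \<Longrightarrow> T \<subseteq> T' \<Longrightarrow> set_add S T \<subseteq> set_add S' T'"
  unfolding set_add_def by blast

lemma set_mul_mono: "S \<subseteq> S' \<Longrightarrow> T \<subseteq> T' \<Longrightarrow> set_mul S T \<subseteq> set_mul S' T'"
  unfolding set_mul_def by blast

theorem lemma2:
  fixes m :: nat and I :: "mono set" and f g h :: mono and r :: nat
  assumes "m \<ge> 1"
    and "decreasing m I"
    and "r = Max (card ` I)"
    and "f \<in> I" and "card f = r"
    and "g \<in> I" and "card g = r"
    and "h = f \<inter> g"
  shows "set_mul (orbit (LTA m) h)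
           (set_add (orbit (LTA m) (f - h)) (orbit (LTA m) (g - h)))
       = set_mul (orbit (LTA_sub m h) h)
           (set_add (orbit (LTA_sub m f) (f - h)) (orbit (LTA_sub m g) (g - h)))"
proof
  have Im: "I \<subseteq> Pow {..<m}" using assms(2) unfolding decreasing_def monomials_def by blast
  have fm: "f \<subseteq> {..<m}" using Im assms(4) by blast
  have gm: "g \<subseteq> {..<m}" using Im assms(6) by blast
  show "set_mul (orbit (LTA m) h) (set_add (orbit (LTA m) (f - h)) (orbit (LTA m) (g - h)))
     \<subseteq> set_mul (orbit (LTA_sub m h) h) (set_add (orbit (LTA_sub m f) (f - h)) (orbit (LTA_sub m g) (g - h)))"
  proof
    fix z assume "z \<in> set_mul (orbit (LTA m) h) (set_add (orbit (LTA m) (f - h)) (orbit (LTA m) (g - h)))"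
    then obtain A0 A1 A2 where "z = pmul (act A0 h) (padd (act A1 (f - h)) (act A2 (g - h)))"
      unfolding set_mul_def set_add_def orbit_def by blast
    then show "z \<in> set_mul (orbit (LTA_sub m h) h) (set_add (orbit (LTA_sub m f) (f - h)) (orbit (LTA_sub m g) (g - h)))"
      using core[OF fm gm assms(8)] by simp
  qed
next
  show "set_mul (orbit (LTA_sub m h) h) (set_add (orbit (LTA_sub m f) (f - h)) (orbit (LTA_sub m g) (g - h)))
     \<subseteq> set_mul (orbit (LTA m) h) (set_add (orbit (LTA m) (f - h)) (orbit (LTA m) (g - h)))"
    by (intro set_mul_mono set_add_mono orbit_mono LTA_sub_subset)
qed

end
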